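(* Let $G$ be a compact Lie group with normalized Haar measure $dg$, and let $k\geq 2$. Let $\sigma_1,\ldots,\sigma_k$ and $\alpha_1,\ldots,\alpha_k$ be finite-dimensional unitary representations of $G$, and for each pair $1\leq i<j\leq k$ let $\rho_{ij}$ be a finite-dimensional unitary representation of $G$. Define the linear operator $$\Phi\colon V_{\sigma_1}\otimes\cdots\otimes V_{\sigma_k}\to V_{\sigma_1}\otimes\cdots\otimes V_{\sigma_k},$$ $$\Phi:=\int_{G^k}\Bigl(\prod_{i=1}^k\chi_{\alpha_i}(g_i)\Bigr)\Bigl(\prod_{1\leq i<j\leq k}\chi_{\rho_{ij}}(g_i g_j^{-1})\Bigr)\,\sigma_1(g_1)\otimes\cdots\otimes\sigma_k(g_k)\,dg_1\cdots dg_k .$$ Then $\Phi$ is a positive operator, i.e. $\langle v,\Phi v\rangle\geq 0$ for all $v\in V_{\sigma_1}\otimes\cdots\otimes V_{\sigma_k}$ (with respect to the tensor product of the $G$-invariant scalar products).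
   Context: For a finite-dimensional representation $\rho\colon G\to\mathrm{Aut}(V_\rho)$, $\chi_\rho(g)=\mathrm{tr}\,\rho(g)$ denotes its character. Each representation space carries a $G$-invariant Hermitian scalar product making the representation unitary. An operator $A$ on a Hilbert space is positive if $\langle v,Av\rangle\geq 0$ for all $v$. (Diagrammatically, $\Phi$ consists of $k$ Haar intertwiners $\int_G\rho_1(g)\otimes\cdots\otimes\rho_r(g)\,dg$, each with one external line $\sigma_i$, one closed loop $\alpha_i$ through it alone, and for each pair $i<j$ one closed loop $\rho_{ij}$ passing through intertwiner $i$ as $\rho_{ij}$ and through intertwiner $j$ as the dual representation.) *)

theory Defs
  imports "HOL-Analysis.Analysis" "HOL-Probability.Probability"
begin

definition compact_matrix_group :: "(complex^'n^'n) set \<Rightarrow> bool" where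
  "compact_matrix_group G \<longleftrightarrow> compact G \<and> mat 1 \<in> G \<and>
     (\<forall>g\<in>G. \<forall>h\<in>G. g ** h \<in> G) \<and>
     (\<forall>g\<in>G. invertible g \<and> matrix_inv g \<in> G)"

text \<open>Normalized Haar measure on G (a Borel probability measure on G, invariant under
left and right translations; on a compact group the normalized Haar measure is bi-invariant).\<close>
definition haar_measure :: "(complex^'n^'n) set \<Rightarrow> (complex^'n^'n) measure \<Rightarrow> bool" where
  "haar_measure G \<mu> \<longleftrightarrow> space \<mu> = G \<and> sets \<mu> = sets (restrict_space borel G) \<and>
     emeasure \<mu> G = 1 \<and>
     (\<forall>g\<in>G. distr \<mu> \<mu> (\<lambda>x. g ** x) = \<mu> \<and> distr \<mu> \<mu> (\<lambda>x. x ** g) = \<mu>)"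

text \<open>A finite-dimensional unitary representation of G of dimension d, given in an
orthonormal basis of its representation space as a matrix-valued function
(only the entries with indices < d are meaningful): continuous homomorphism into U(d).\<close>
definition unitary_rep :: "(complex^'n^'n) set \<Rightarrow> nat \<Rightarrow> (complex^'n^'n \<Rightarrow> nat \<Rightarrow> nat \<Rightarrow> complex) \<Rightarrow> bool" where
  "unitary_rep G d \<rho> \<longleftrightarrow>
     (\<forall>a<d. \<forall>b<d. continuous_on G (\<lambda>g. \<rho> g a b)) \<and>
     (\<forall>g\<in>G. \<forall>h\<in>G. \<forall>a<d. \<forall>b<d. \<rho> (g ** h) a b = (\<Sum>c<d. \<rho> g a c * \<rho> h c b)) \<and>
     (\<forall>a<d. \<forall>b<d. \<rho> (mat 1) a b = (if a = b then 1 else 0)) \<and>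
     (\<forall>g\<in>G. \<forall>a<d. \<forall>b<d. (\<Sum>c<d. cnj (\<rho> g c a) * \<rho> g c b) = (if a = b then 1 else 0))"

definition character :: "nat \<Rightarrow> (complex^'n^'n \<Rightarrow> nat \<Rightarrow> nat \<Rightarrow> complex) \<Rightarrow> complex^'n^'n \<Rightarrow> complex" where
  "character d \<rho> g = (\<Sum>a<d. \<rho> g a a)"

definition tensor_indices :: "nat \<Rightarrow> (nat \<Rightarrow> nat) \<Rightarrow> (nat \<Rightarrow> nat) set" where
  "tensor_indices k d = PiE {..<k} (\<lambda>i. {..<d i})"

definition Phi_entry ::
  "(complex^'n^'n) measure \<Rightarrow> nat \<Rightarrow>
   (nat \<Rightarrow> nat) \<Rightarrow> (nat \<Rightarrow> complex^'n^'n \<Rightarrow> nat \<Rightarrow> nat \<Rightarrow> complex) \<Rightarrow>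
   (nat \<Rightarrow> nat) \<Rightarrow> (nat \<Rightarrow> complex^'n^'n \<Rightarrow> nat \<Rightarrow> nat \<Rightarrow> complex) \<Rightarrow>
   (nat \<Rightarrow> nat \<Rightarrow> nat) \<Rightarrow> (nat \<Rightarrow> nat \<Rightarrow> complex^'n^'n \<Rightarrow> nat \<Rightarrow> nat \<Rightarrow> complex) \<Rightarrow>
   (nat \<Rightarrow> nat) \<Rightarrow> (nat \<Rightarrow> nat) \<Rightarrow> complex" where
  "Phi_entry \<mu> k d\<sigma> \<sigma> d\<alpha> \<alpha> d\<rho> \<rho> a b =
     integral\<^sup>L (PiM {..<k} (\<lambda>_. \<mu>))
       (\<lambda>g. (\<Prod>i<k. character (d\<alpha> i) (\<alpha> i) (g i)) *
            (\<Prod>(i,j)\<in>{(i,j). i < j \<and> j < k}. character (d\<rho> i j) (\<rho> i j) (g i ** matrix_inv (g j))) *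
            (\<Prod>i<k. \<sigma> i (g i) (a i) (b i)))"

end

theory Submission
  imports Defs
begin

lemma inv_right: "invertible (g::complex^'n^'n) \<Longrightarrow> g ** matrix_inv g = mat 1"
  unfolding invertible_def matrix_inv_def by (rule someI2_ex) auto

lemma cmg_inv: "compact_matrix_group G \<Longrightarrow> g \<in> G \<Longrightarrow> matrix_inv g \<in> G"
  unfolding compact_matrix_group_def by auto
lemma cmg_invertible: "compact_matrix_group G \<Longrightarrow> g \<in> G \<Longrightarrow> invertible g"
  unfolding compact_matrix_group_def by auto
lemma cmg_mult: "compact_matrix_group G \<Longrightarrow> g \<in> G \<Longrightarrow> h \<in> G \<Longrightarrow> g ** h \<in> G"
  unfolding compact_matrix_group_def by auto

lemma rep_inv:
  assumes G: "compact_matrix_group G" and r: "unitary_rep G d \<rho>" and g: "g \<in> G"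
    and a: "a < d" and b: "b < d"
  shows "\<rho> (matrix_inv g) a b = cnj (\<rho> g b a)"
proof -
  let ?ig = "matrix_inv g"
  have ig: "?ig \<in> G" using cmg_inv[OF G g] .
  have one: "g ** ?ig = mat 1" using inv_right[OF cmg_invertible[OF G g]] .
  have hom: "\<And>c e. c < d \<Longrightarrow> e < d \<Longrightarrow> \<rho> (g ** ?ig) c e = (\<Sum>f<d. \<rho> g c f * \<rho> ?ig f e)"
    using r g ig unfolding unitary_rep_def by auto
  have idm: "\<And>c e. c < d \<Longrightarrow> e < d \<Longrightarrow> \<rho> (mat 1) c e = (if c = e then 1 else 0)"
    using r unfolding unitary_rep_def by auto
  have un: "\<And>c e. c < d \<Longrightarrow> e < d \<Longrightarrow> (\<Sum>f<d. cnj (\<rho> g f c) * \<rho> g f e) = (if c = e then 1 else 0)"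
    using r g unfolding unitary_rep_def by auto
  have "cnj (\<rho> g b a) = (\<Sum>c<d. cnj (\<rho> g c a) * (if c = b then 1 else 0))"
    using b by (simp add: if_distrib sum.delta cong: if_cong)
  also have "\<dots> = (\<Sum>c<d. cnj (\<rho> g c a) * (\<Sum>f<d. \<rho> g c f * \<rho> ?ig f b))"
  proof (intro sum.cong refl)
    fix c assume "c \<in> {..<d}"
    hence c: "c < d" by simp
    have "(if c = b then 1 else 0) = \<rho> (mat 1) c b" by (rule idm[symmetric, OF c b])
    also have "\<dots> = (\<Sum>f<d. \<rho> g c f * \<rho> ?ig f b)" unfolding one[symmetric] by (rule hom[OF c b])
    finally show "cnj (\<rho> g c a) * (if c = b then 1 else 0) = cnj (\<rho> g c a) * (\<Sum>f<d. \<rho> g c f * \<rho> ?ig f b)" by simp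
  qed
  also have "\<dots> = (\<Sum>f<d. (\<Sum>c<d. cnj (\<rho> g c a) * \<rho> g c f) * \<rho> ?ig f b)"
    by (simp add: sum_distrib_left sum_distrib_right mult.assoc) (rule sum.swap)
  also have "\<dots> = (\<Sum>f<d. (if a = f then 1 else 0) * \<rho> ?ig f b)"
    by (intro sum.cong refl) (simp add: un a)
  also have "\<dots> = (\<Sum>f<d. (if a = f then \<rho> ?ig f b else 0))"
    by (intro sum.cong refl) simp
  also have "\<dots> = \<rho> ?ig a b" using a by (simp add: sum.delta)
  finally show ?thesis by simp
qed

lemma rep_translate:
  assumes G: "compact_matrix_group G" and r: "unitary_rep G d \<rho>" and g: "g \<in> G" and h: "h \<in> G"
    and a: "a < d" and b: "b < d"
  shows "\<rho> (matrix_inv h ** g) a b = (\<Sum>c<d. cnj (\<rho> h c a) * \<rho> g c b)"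
proof -
  have "\<rho> (matrix_inv h ** g) a b = (\<Sum>c<d. \<rho> (matrix_inv h) a c * \<rho> g c b)"
    using r g cmg_inv[OF G h] a b unfolding unitary_rep_def by auto
  also have "\<dots> = (\<Sum>c<d. cnj (\<rho> h c a) * \<rho> g c b)"
    by (intro sum.cong refl) (simp add: rep_inv[OF G r h] a)
  finally show ?thesis .
qed

lemma rep_bound:
  assumes r: "unitary_rep G d \<rho>" and g: "g \<in> G" and a: "a < d" and b: "b < d"
  shows "norm (\<rho> g a b) \<le> 1"
proof -
  have "(\<Sum>c<d. cnj (\<rho> g c b) * \<rho> g c b) = 1"
    using r g b unfolding unitary_rep_def by auto
  moreover have "\<And>c. cnj (\<rho> g c b) * \<rho> g c b = complex_of_real ((norm (\<rho> g c b))\<^sup>2)"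
    by (metis complex_norm_square mult.commute)
  ultimately have "(\<Sum>c<d. complex_of_real ((norm (\<rho> g c b))\<^sup>2)) = 1"
    by simp
  hence s: "(\<Sum>c<d. (norm (\<rho> g c b))\<^sup>2) = 1"
    by (metis of_real_eq_1_iff of_real_sum)
  have "(norm (\<rho> g a b))\<^sup>2 \<le> (\<Sum>c<d. (norm (\<rho> g c b))\<^sup>2)"
    by (rule member_le_sum) (use a in auto)
  hence "(norm (\<rho> g a b))\<^sup>2 \<le> 1" using s by simp
  thus ?thesis using power2_le_imp_le[of "norm (\<rho> g a b)" 1] by simp
qed


lemma haar_prob: "haar_measure G \<mu> \<Longrightarrow> prob_space \<mu>"
  unfolding haar_measure_def by (intro prob_spaceI) auto

lemma haar_meas_cont:
  assumes "haar_measure G \<mu>" "continuous_on G f"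
  shows "f \<in> borel_measurable \<mu>"
proof -
  have s: "sets \<mu> = sets (restrict_space borel G)" using assms(1) unfolding haar_measure_def by auto
  show ?thesis unfolding measurable_cong_sets[OF s refl]
    by (rule borel_measurable_continuous_on_restrict[OF assms(2)])
qed

lemma haar_meas_lmult:
  fixes A :: "complex^'n^'n"
  assumes "haar_measure G \<mu>" "\<And>x. x \<in> G \<Longrightarrow> A ** x \<in> G"
  shows "(\<lambda>x. A ** x) \<in> measurable \<mu> \<mu>"
proof -
  have s: "sets \<mu> = sets (restrict_space borel G)" using assms(1) unfolding haar_measure_def by auto
  have c: "continuous_on UNIV (\<lambda>x::complex^'n^'n. A ** x)"
    unfolding matrix_matrix_mult_def by (intro continuous_intros)
  show ?thesis unfolding measurable_cong_sets[OF s s]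
    by (rule measurable_restrict_space3[OF borel_measurable_continuous_onI[OF c]]) (use assms(2) in auto)
qed

lemma distr_PiM_translate:
  assumes fin: "finite I" and N: "prob_space N"
    and meas: "\<And>i. i \<in> I \<Longrightarrow> f i \<in> measurable N N"
    and inv: "\<And>i. i \<in> I \<Longrightarrow> distr N N (f i) = N"
  shows "distr (PiM I (\<lambda>_. N)) (PiM I (\<lambda>_. N)) (\<lambda>x. \<lambda>i\<in>I. f i (x i)) = PiM I (\<lambda>_. N)"
proof -
  interpret N: prob_space N by fact
  interpret P: product_sigma_finite "\<lambda>_. N"
    by (simp add: product_sigma_finite_def N.sigma_finite_measure_axioms)
  have T: "(\<lambda>x. \<lambda>i\<in>I. f i (x i)) \<in> measurable (PiM I (\<lambda>_. N)) (PiM I (\<lambda>_. N))"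
  proof (rule measurable_restrict)
    fix i assume i: "i \<in> I"
    show "(\<lambda>x. f i (x i)) \<in> measurable (PiM I (\<lambda>_. N)) N"
      by (rule measurable_compose[OF measurable_component_singleton[OF i] meas[OF i]])
  qed
  show ?thesis
  proof (rule P.PiM_eqI[OF fin])
    show "sets (distr (PiM I (\<lambda>_. N)) (PiM I (\<lambda>_. N)) (\<lambda>x. \<lambda>i\<in>I. f i (x i))) = sets (PiM I (\<lambda>_. N))"
      by simp
    fix A assume A: "\<And>i. i \<in> I \<Longrightarrow> A i \<in> sets N"
    have "emeasure (distr (PiM I (\<lambda>_. N)) (PiM I (\<lambda>_. N)) (\<lambda>x. \<lambda>i\<in>I. f i (x i))) (PiE I A)
        = emeasure (PiM I (\<lambda>_. N)) ((\<lambda>x. \<lambda>i\<in>I. f i (x i)) -` PiE I A \<inter> space (PiM I (\<lambda>_. N)))"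
      by (rule emeasure_distr[OF T]) (intro sets_PiM_I_finite fin A)
    also have "(\<lambda>x. \<lambda>i\<in>I. f i (x i)) -` PiE I A \<inter> space (PiM I (\<lambda>_. N)) = PiE I (\<lambda>i. f i -` A i \<inter> space N)"
      by (auto simp: space_PiM PiE_def Pi_def extensional_def)
    also have "emeasure (PiM I (\<lambda>_. N)) (PiE I (\<lambda>i. f i -` A i \<inter> space N)) = (\<Prod>i\<in>I. emeasure N (f i -` A i \<inter> space N))"
      by (rule P.emeasure_PiM[OF fin]) (use A meas in \<open>auto intro: measurable_sets\<close>)
    also have "\<dots> = (\<Prod>i\<in>I. emeasure (distr N N (f i)) (A i))"
      by (intro prod.cong refl emeasure_distr[symmetric] meas A)
    also have "\<dots> = (\<Prod>i\<in>I. emeasure N (A i))"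
      by (intro prod.cong refl) (simp add: inv)
    finally show "emeasure (distr (PiM I (\<lambda>_. N)) (PiM I (\<lambda>_. N)) (\<lambda>x. \<lambda>i\<in>I. f i (x i))) (PiE I A) = (\<Prod>i\<in>I. emeasure N (A i))" .
  qed
qed

definition bm :: "'a measure \<Rightarrow> ('a \<Rightarrow> complex) \<Rightarrow> bool" where
  "bm M f \<longleftrightarrow> f \<in> borel_measurable M \<and> (\<exists>B. \<forall>x\<in>space M. norm (f x) \<le> B)"

lemma bm_const: "bm M (\<lambda>_. c)"
  unfolding bm_def by auto

lemma bm_mult: "bm M f \<Longrightarrow> bm M g \<Longrightarrow> bm M (\<lambda>x. f x * g x)"
  unfolding bm_def
proof (elim conjE exE, intro conjI)
  fix B C assume f: "f \<in> borel_measurable M" and g: "g \<in> borel_measurable M"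
    and B: "\<forall>x\<in>space M. norm (f x) \<le> B" and C: "\<forall>x\<in>space M. norm (g x) \<le> C"
  show "(\<lambda>x. f x * g x) \<in> borel_measurable M" using f g by measurable
  show "\<exists>B. \<forall>x\<in>space M. norm (f x * g x) \<le> B"
  proof (intro exI ballI)
    fix x assume x: "x \<in> space M"
    have eq: "norm (f x * g x) = norm (f x) * norm (g x)" by (simp add: norm_mult)
    have "0 \<le> B" using B x norm_ge_zero order_trans by blast
    have "0 \<le> C" using C x norm_ge_zero order_trans by blast
    have "norm (f x) * norm (g x) \<le> B * C" using B C x \<open>0 \<le> B\<close> \<open>0 \<le> C\<close> by (intro mult_mono) auto
    then show "norm (f x * g x) \<le> B * C" using eq by simp
  qed
qed

lemma bm_add: "bm M f \<Longrightarrow> bm M g \<Longrightarrow> bm M (\<lambda>x. f x + g x)"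
  unfolding bm_def
proof (elim conjE exE, intro conjI)
  fix B C assume f: "f \<in> borel_measurable M" and g: "g \<in> borel_measurable M"
    and B: "\<forall>x\<in>space M. norm (f x) \<le> B" and C: "\<forall>x\<in>space M. norm (g x) \<le> C"
  show "(\<lambda>x. f x + g x) \<in> borel_measurable M" using f g by measurable
  show "\<exists>B. \<forall>x\<in>space M. norm (f x + g x) \<le> B"
  proof (intro exI ballI)
    fix x assume x: "x \<in> space M"
    have "norm (f x + g x) \<le> norm (f x) + norm (g x)" by (rule norm_triangle_ineq)
    also have "\<dots> \<le> B + C" using B C x by (intro add_mono) auto
    finally show "norm (f x + g x) \<le> B + C" .
  qed
qed

lemma cnj_meas: "(\<lambda>x::complex. cnj x) \<in> borel_measurable borel"
  by (rule borel_measurable_continuous_onI) (intro continuous_intros)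

lemma bm_cnj: "bm M f \<Longrightarrow> bm M (\<lambda>x. cnj (f x))"
  unfolding bm_def using measurable_compose[OF _ cnj_meas] by auto

lemma bm_sum: "finite S \<Longrightarrow> (\<And>s. s \<in> S \<Longrightarrow> bm M (f s)) \<Longrightarrow> bm M (\<lambda>x. \<Sum>s\<in>S. f s x)"
  by (induction S rule: finite_induct) (auto intro: bm_add bm_const)

lemma bm_prod: "finite S \<Longrightarrow> (\<And>s. s \<in> S \<Longrightarrow> bm M (f s)) \<Longrightarrow> bm M (\<lambda>x. \<Prod>s\<in>S. f s x)"
  by (induction S rule: finite_induct) (auto intro: bm_mult bm_const)

lemma bm_integrable: "finite_measure M \<Longrightarrow> bm M f \<Longrightarrow> integrable M f"
  unfolding bm_def by (auto intro: finite_measure.integrable_const_bound)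


lemma kprod:
  assumes "finite I" "\<And>i. i \<in> I \<Longrightarrow> finite (X i)"
  shows "(\<Prod>i\<in>I. \<Sum>x\<in>X i. cnj (u i x) * w i x)
       = (\<Sum>f\<in>PiE I X. cnj (\<Prod>i\<in>I. u i (f i)) * (\<Prod>i\<in>I. w i (f i)))"
proof -
  have "(\<Prod>i\<in>I. \<Sum>x\<in>X i. cnj (u i x) * w i x) = (\<Sum>f\<in>PiE I X. \<Prod>i\<in>I. cnj (u i (f i)) * w i (f i))"
    by (rule prod_sum_PiE[OF assms])
  also have "\<dots> = (\<Sum>f\<in>PiE I X. cnj (\<Prod>i\<in>I. u i (f i)) * (\<Prod>i\<in>I. w i (f i)))"
    by (intro sum.cong refl) (simp add: prod.distrib cnj_prod)
  finally show ?thesis .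
qed

lemma kbin:
  "(\<Sum>x\<in>X. cnj (a x) * b x) * (\<Sum>y\<in>Y. cnj (c y) * d y)
   = (\<Sum>p\<in>X \<times> Y. cnj (a (fst p) * c (snd p)) * (b (fst p) * d (snd p)))"
  by (simp add: sum_product sum.cartesian_product case_prod_beta mult_ac)

lemma psd_int:
  assumes M: "prob_space M" and X: "finite X" and U: "\<And>x. x \<in> X \<Longrightarrow> integrable M (U x)"
  shows "(\<integral>h. (\<integral>g. (\<Sum>x\<in>X. cnj (U x h) * U x g) \<partial>M) \<partial>M) = (\<Sum>x\<in>X. cnj (integral\<^sup>L M (U x)) * integral\<^sup>L M (U x))"
proof -
  have "(\<integral>h. (\<integral>g. (\<Sum>x\<in>X. cnj (U x h) * U x g) \<partial>M) \<partial>M) = (\<integral>h. (\<Sum>x\<in>X. cnj (U x h) * integral\<^sup>L M (U x)) \<partial>M)"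
  proof (rule Bochner_Integration.integral_cong[OF refl])
    fix h
    have "(\<integral>g. (\<Sum>x\<in>X. cnj (U x h) * U x g) \<partial>M) = (\<Sum>x\<in>X. (\<integral>g. cnj (U x h) * U x g \<partial>M))"
      by (rule Bochner_Integration.integral_sum) (use U in auto)
    also have "\<dots> = (\<Sum>x\<in>X. cnj (U x h) * integral\<^sup>L M (U x))"
      by (intro sum.cong refl integral_mult_right_zero)
    finally show "(\<integral>g. (\<Sum>x\<in>X. cnj (U x h) * U x g) \<partial>M) = (\<Sum>x\<in>X. cnj (U x h) * integral\<^sup>L M (U x))" .
  qed
  also have "\<dots> = (\<Sum>x\<in>X. (\<integral>h. cnj (U x h) * integral\<^sup>L M (U x) \<partial>M))"
    by (rule Bochner_Integration.integral_sum) (use U in \<open>auto intro: integrable_mult_left integrable_cnj\<close>)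
  also have "\<dots> = (\<Sum>x\<in>X. cnj (integral\<^sup>L M (U x)) * integral\<^sup>L M (U x))"
    by (intro sum.cong refl) (simp add: integral_mult_left_zero)
  finally show ?thesis .
qed

lemma sum_cnj_sq:
  "Im (\<Sum>x\<in>X. cnj (z x) * z x) = 0 \<and> Re (\<Sum>x\<in>X. cnj (z x) * z x) \<ge> 0"
proof -
  have e: "\<And>x. cnj (z x) * z x = complex_of_real ((norm (z x))\<^sup>2)"
    by (metis complex_norm_square mult.commute)
  show ?thesis unfolding e by (simp add: Im_sum Re_sum sum_nonneg)
qed


lemma char_mult_inv:
  assumes G: "compact_matrix_group G" and r: "unitary_rep G d \<rho>" and x: "x \<in> G" and y: "y \<in> G"
  shows "character d \<rho> (x ** matrix_inv y) = (\<Sum>a<d. \<Sum>c<d. \<rho> x a c * cnj (\<rho> y a c))"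
  unfolding character_def
proof (rule sum.cong[OF refl])
  fix a assume "a \<in> {..<d}" hence a: "a < d" by simp
  have "\<rho> (x ** matrix_inv y) a a = (\<Sum>c<d. \<rho> x a c * \<rho> (matrix_inv y) c a)"
    using r x cmg_inv[OF G y] a unfolding unitary_rep_def by auto
  also have "\<dots> = (\<Sum>c<d. \<rho> x a c * cnj (\<rho> y a c))"
    by (intro sum.cong refl) (simp add: rep_inv[OF G r y] a)
  finally show "\<rho> (x ** matrix_inv y) a a = (\<Sum>c<d. \<rho> x a c * cnj (\<rho> y a c))" .
qed

lemma char_translate:
  assumes G: "compact_matrix_group G" and r: "unitary_rep G d \<rho>" and h: "h \<in> G" and g: "g \<in> G"
  shows "character d \<rho> (matrix_inv h ** g) = (\<Sum>p\<in>{..<d}\<times>{..<d}. cnj (\<rho> h (fst p) (snd p)) * \<rho> g (fst p) (snd p))"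
proof -
  have "character d \<rho> (matrix_inv h ** g) = (\<Sum>a<d. \<Sum>c<d. cnj (\<rho> h c a) * \<rho> g c a)"
    unfolding character_def by (intro sum.cong refl) (simp add: rep_translate[OF G r g h])
  also have "\<dots> = (\<Sum>c<d. \<Sum>a<d. cnj (\<rho> h c a) * \<rho> g c a)" by (rule sum.swap)
  also have "\<dots> = (\<Sum>p\<in>{..<d}\<times>{..<d}. cnj (\<rho> h (fst p) (snd p)) * \<rho> g (fst p) (snd p))"
    by (simp add: sum.cartesian_product case_prod_beta)
  finally show ?thesis .
qed

lemma swap4:
  "(\<Sum>a\<in>D. \<Sum>c\<in>D. \<Sum>p\<in>D. \<Sum>q\<in>D. T a c p q) = (\<Sum>p\<in>D. \<Sum>q\<in>D. \<Sum>a\<in>D. \<Sum>c\<in>D. T a c p q)"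
proof -
  have "(\<Sum>a\<in>D. \<Sum>c\<in>D. \<Sum>p\<in>D. \<Sum>q\<in>D. T a c p q) = (\<Sum>a\<in>D. \<Sum>p\<in>D. \<Sum>c\<in>D. \<Sum>q\<in>D. T a c p q)"
    by (rule sum.cong[OF refl], rule sum.swap)
  also have "\<dots> = (\<Sum>a\<in>D. \<Sum>p\<in>D. \<Sum>q\<in>D. \<Sum>c\<in>D. T a c p q)"
    by (rule sum.cong[OF refl], rule sum.cong[OF refl], rule sum.swap)
  also have "\<dots> = (\<Sum>p\<in>D. \<Sum>a\<in>D. \<Sum>q\<in>D. \<Sum>c\<in>D. T a c p q)"
    by (rule sum.swap)
  also have "\<dots> = (\<Sum>p\<in>D. \<Sum>q\<in>D. \<Sum>a\<in>D. \<Sum>c\<in>D. T a c p q)"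
    by (rule sum.cong[OF refl], rule sum.swap)
  finally show ?thesis .
qed

lemma rho_alg:
  fixes X Y Z W :: "nat \<Rightarrow> nat \<Rightarrow> complex"
  shows "(\<Sum>a<d. \<Sum>c<d. (\<Sum>p<d. cnj (X p a) * Y p c) * cnj (\<Sum>q<d. cnj (Z q a) * W q c))
   = (\<Sum>pq\<in>{..<d}\<times>{..<d}. cnj (\<Sum>a<d. X (fst pq) a * cnj (Z (snd pq) a)) * (\<Sum>c<d. Y (fst pq) c * cnj (W (snd pq) c)))"
proof -
  have "(\<Sum>a<d. \<Sum>c<d. (\<Sum>p<d. cnj (X p a) * Y p c) * cnj (\<Sum>q<d. cnj (Z q a) * W q c))
      = (\<Sum>a<d. \<Sum>c<d. \<Sum>q<d. \<Sum>p<d. cnj (X p a) * Y p c * (Z q a * cnj (W q c)))"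
    by (simp add: sum_distrib_left sum_distrib_right cnj_sum)
  also have "\<dots> = (\<Sum>a<d. \<Sum>c<d. \<Sum>p<d. \<Sum>q<d. cnj (X p a) * Y p c * (Z q a * cnj (W q c)))"
    by (rule sum.cong[OF refl], rule sum.cong[OF refl], rule sum.swap)
  also have "\<dots> = (\<Sum>p<d. \<Sum>q<d. \<Sum>a<d. \<Sum>c<d. cnj (X p a) * Y p c * (Z q a * cnj (W q c)))"
    by (rule swap4)
  also have "\<dots> = (\<Sum>p<d. \<Sum>q<d. cnj (\<Sum>a<d. X p a * cnj (Z q a)) * (\<Sum>c<d. Y p c * cnj (W q c)))"
    by (simp add: sum_distrib_left sum_distrib_right cnj_sum mult_ac)
  also have "\<dots> = (\<Sum>pq\<in>{..<d}\<times>{..<d}. cnj (\<Sum>a<d. X (fst pq) a * cnj (Z (snd pq) a)) * (\<Sum>c<d. Y (fst pq) c * cnj (W (snd pq) c)))"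
    by (simp add: sum.cartesian_product case_prod_beta)
  finally show ?thesis .
qed

lemma sig_alg:
  fixes Ph Pg :: "'a \<Rightarrow> 'a \<Rightarrow> complex"
  shows "(\<Sum>a\<in>T. \<Sum>b\<in>T. cnj (v a) * (\<Sum>C\<in>T. cnj (Ph a C) * Pg C b) * v b)
       = (\<Sum>C\<in>T. cnj (\<Sum>a\<in>T. Ph a C * v a) * (\<Sum>b\<in>T. Pg C b * v b))"
proof -
  have "(\<Sum>a\<in>T. \<Sum>b\<in>T. cnj (v a) * (\<Sum>C\<in>T. cnj (Ph a C) * Pg C b) * v b)
      = (\<Sum>a\<in>T. \<Sum>b\<in>T. \<Sum>C\<in>T. cnj (v a) * cnj (Ph a C) * Pg C b * v b)"
    by (simp add: sum_distrib_left sum_distrib_right mult_ac)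
  also have "\<dots> = (\<Sum>a\<in>T. \<Sum>C\<in>T. \<Sum>b\<in>T. cnj (v a) * cnj (Ph a C) * Pg C b * v b)"
    by (rule sum.cong[OF refl], rule sum.swap)
  also have "\<dots> = (\<Sum>C\<in>T. \<Sum>a\<in>T. \<Sum>b\<in>T. cnj (v a) * cnj (Ph a C) * Pg C b * v b)"
    by (rule sum.swap)
  also have "\<dots> = (\<Sum>C\<in>T. cnj (\<Sum>a\<in>T. Ph a C * v a) * (\<Sum>b\<in>T. Pg C b * v b))"
    by (simp add: sum_distrib_left sum_distrib_right cnj_sum mult_ac)
  finally show ?thesis .
qed

lemma entry_bm:
  assumes H: "haar_measure G \<mu>" and r: "unitary_rep G d \<pi>" and i: "i \<in> I" and a: "a < d" and b: "b < d"
  shows "bm (PiM I (\<lambda>_. \<mu>)) (\<lambda>g. \<pi> (g i) a b)"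
  unfolding bm_def
proof (intro conjI exI ballI)
  have c: "continuous_on G (\<lambda>g. \<pi> g a b)" using r a b unfolding unitary_rep_def by auto
  show "(\<lambda>g. \<pi> (g i) a b) \<in> borel_measurable (PiM I (\<lambda>_. \<mu>))"
    by (rule measurable_compose[OF measurable_component_singleton[OF i] haar_meas_cont[OF H c]])
  fix g assume "g \<in> space (PiM I (\<lambda>_. \<mu>))"
  hence "g i \<in> G" using i H unfolding haar_measure_def by (auto simp: space_PiM)
  thus "norm (\<pi> (g i) a b) \<le> 1" by (rule rep_bound[OF r _ a b])
qed

lemma translate_meas:
  assumes "\<And>i. i \<in> I \<Longrightarrow> f i \<in> measurable N N"
  shows "(\<lambda>x. \<lambda>i\<in>I. f i (x i)) \<in> measurable (PiM I (\<lambda>_. N)) (PiM I (\<lambda>_. N))"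
proof (rule measurable_restrict)
  fix i assume i: "i \<in> I"
  show "(\<lambda>x. f i (x i)) \<in> measurable (PiM I (\<lambda>_. N)) N"
    by (rule measurable_compose[OF measurable_component_singleton[OF i] assms[OF i]])
qed


theorem theorem1:
  fixes G :: "(complex^'n^'n) set" and \<mu> :: "(complex^'n^'n) measure"
    and k :: nat
    and d\<sigma> d\<alpha> :: "nat \<Rightarrow> nat" and \<sigma> \<alpha> :: "nat \<Rightarrow> complex^'n^'n \<Rightarrow> nat \<Rightarrow> nat \<Rightarrow> complex"
    and d\<rho> :: "nat \<Rightarrow> nat \<Rightarrow> nat" and \<rho> :: "nat \<Rightarrow> nat \<Rightarrow> complex^'n^'n \<Rightarrow> nat \<Rightarrow> nat \<Rightarrow> complex"
    and v :: "(nat \<Rightarrow> nat) \<Rightarrow> complex"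
  assumes "compact_matrix_group G"
    and "haar_measure G \<mu>"
    and "k \<ge> 2"
    and "\<forall>i<k. unitary_rep G (d\<sigma> i) (\<sigma> i)"
    and "\<forall>i<k. unitary_rep G (d\<alpha> i) (\<alpha> i)"
    and "\<forall>i j. i < j \<and> j < k \<longrightarrow> unitary_rep G (d\<rho> i j) (\<rho> i j)"
  shows "Im (\<Sum>a\<in>tensor_indices k d\<sigma>. \<Sum>b\<in>tensor_indices k d\<sigma>.
             cnj (v a) * Phi_entry \<mu> k d\<sigma> \<sigma> d\<alpha> \<alpha> d\<rho> \<rho> a b * v b) = 0
       \<and> Re (\<Sum>a\<in>tensor_indices k d\<sigma>. \<Sum>b\<in>tensor_indices k d\<sigma>.
             cnj (v a) * Phi_entry \<mu> k d\<sigma> \<sigma> d\<alpha> \<alpha> d\<rho> \<rho> a b * v b) \<ge> 0"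
proof -
  note G = assms(1) and H = assms(2)
  have rs: "\<And>i. i < k \<Longrightarrow> unitary_rep G (d\<sigma> i) (\<sigma> i)" using assms(4) by auto
  have ra: "\<And>i. i < k \<Longrightarrow> unitary_rep G (d\<alpha> i) (\<alpha> i)" using assms(5) by auto
  have rr: "\<And>i j. i < j \<Longrightarrow> j < k \<Longrightarrow> unitary_rep G (d\<rho> i j) (\<rho> i j)" using assms(6) by auto
  have spmu: "space \<mu> = G" using H unfolding haar_measure_def by auto
  define M where "M = PiM {..<k} (\<lambda>_. \<mu>)"
  define P where "P = {(i,j). i < j \<and> j < (k::nat)}"
  define TI where "TI = tensor_indices k d\<sigma>"
  have Pfin: "finite P"
  proof -
    have "P \<subseteq> {..<k} \<times> {..<k}" unfolding P_def by auto
    thus ?thesis by (rule finite_subset) auto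
  qed
  have TIfin: "finite TI" unfolding TI_def tensor_indices_def by (intro finite_PiE) auto
  have TIi: "\<And>a i. a \<in> TI \<Longrightarrow> i < k \<Longrightarrow> a i < d\<sigma> i"
    unfolding TI_def tensor_indices_def by (auto simp: PiE_iff)
  have spM: "\<And>g i. g \<in> space M \<Longrightarrow> i < k \<Longrightarrow> g i \<in> G"
    unfolding M_def using spmu by (auto simp: space_PiM)
  have muprob: "prob_space \<mu>" by (rule haar_prob[OF H])
  have Mprob: "prob_space M" unfolding M_def by (intro prob_space_PiM muprob)
  interpret Mp: prob_space M by (rule Mprob)
  have intg: "\<And>f. bm M f \<Longrightarrow> integrable M f"
    by (rule bm_integrable[OF Mp.finite_measure_axioms])

  have eA: "bm M (\<lambda>g. \<alpha> i (g i) a b)" if "i < k" "a < d\<alpha> i" "b < d\<alpha> i" for i a b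
    unfolding M_def by (rule entry_bm[OF H ra[OF that(1)]]) (use that in auto)
  have eS: "bm M (\<lambda>g. \<sigma> i (g i) a b)" if "i < k" "a < d\<sigma> i" "b < d\<sigma> i" for i a b
    unfolding M_def by (rule entry_bm[OF H rs[OF that(1)]]) (use that in auto)
  have eR: "bm M (\<lambda>g. \<rho> i j (g l) a b)" if "i < j" "j < k" "l < k" "a < d\<rho> i j" "b < d\<rho> i j" for i j l a b
    unfolding M_def by (rule entry_bm[OF H rr[OF that(1,2)]]) (use that in auto)

  define Ach where "Ach g = (\<Prod>i<k. character (d\<alpha> i) (\<alpha> i) (g i))" for g :: "nat \<Rightarrow> complex^'n^'n"
  define Rr where "Rr g = (\<Prod>(i,j)\<in>P. \<Sum>a<d\<rho> i j. \<Sum>c<d\<rho> i j. \<rho> i j (g i) a c * cnj (\<rho> i j (g j) a c))"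
    for g :: "nat \<Rightarrow> complex^'n^'n"
  define Sg where "Sg a b g = (\<Prod>i<k. \<sigma> i (g i) (a i) (b i))" for a b :: "nat \<Rightarrow> nat" and g :: "nat \<Rightarrow> complex^'n^'n"
  define F where "F g = Ach g * Rr g * (\<Sum>a\<in>TI. \<Sum>b\<in>TI. cnj (v a) * Sg a b g * v b)" for g

  have bmA: "bm M Ach"
    unfolding Ach_def[abs_def] character_def
    by (intro bm_prod bm_sum eA) auto
  have bmR: "bm M Rr"
    unfolding Rr_def[abs_def]
    apply (rule bm_prod[OF Pfin])
    apply (clarsimp simp: P_def)
    apply (intro bm_sum bm_mult bm_cnj eR)
            apply auto
    done
  have bmS: "bm M (Sg a b)" if "a \<in> TI" "b \<in> TI" for a b
    unfolding Sg_def by (intro bm_prod eS) (auto intro: TIi that)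
  have bmF: "bm M F"
    unfolding F_def[abs_def]
    by (intro bm_mult bmA bmR bm_sum bm_const bmS TIfin)

  have Phi: "Phi_entry \<mu> k d\<sigma> \<sigma> d\<alpha> \<alpha> d\<rho> \<rho> a b = integral\<^sup>L M (\<lambda>g. Ach g * Rr g * Sg a b g)" for a b
    unfolding Phi_entry_def M_def[symmetric] P_def[symmetric]
  proof (rule Bochner_Integration.integral_cong[OF refl])
    fix g assume g: "g \<in> space M"
    have "(\<Prod>(i,j)\<in>P. character (d\<rho> i j) (\<rho> i j) (g i ** matrix_inv (g j))) = Rr g"
      unfolding Rr_def
      apply (rule prod.cong[OF refl])
      apply (clarsimp simp: P_def)
      apply (rule char_mult_inv[OF G rr spM[OF g] spM[OF g]])
         apply auto
      done
    thus "(\<Prod>i<k. character (d\<alpha> i) (\<alpha> i) (g i)) *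
          (\<Prod>(i,j)\<in>P. character (d\<rho> i j) (\<rho> i j) (g i ** matrix_inv (g j))) *
          (\<Prod>i<k. \<sigma> i (g i) (a i) (b i)) = Ach g * Rr g * Sg a b g"
      unfolding Ach_def Sg_def by simp
  qed

  have Qeq: "(\<Sum>a\<in>TI. \<Sum>b\<in>TI. cnj (v a) * Phi_entry \<mu> k d\<sigma> \<sigma> d\<alpha> \<alpha> d\<rho> \<rho> a b * v b) = integral\<^sup>L M F"
  proof -
    have "(\<Sum>a\<in>TI. \<Sum>b\<in>TI. cnj (v a) * Phi_entry \<mu> k d\<sigma> \<sigma> d\<alpha> \<alpha> d\<rho> \<rho> a b * v b)
        = (\<Sum>a\<in>TI. \<Sum>b\<in>TI. integral\<^sup>L M (\<lambda>g. cnj (v a) * (Ach g * Rr g * Sg a b g) * v b))"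
      by (intro sum.cong refl) (simp add: Phi)
    also have "\<dots> = (\<Sum>a\<in>TI. integral\<^sup>L M (\<lambda>g. \<Sum>b\<in>TI. cnj (v a) * (Ach g * Rr g * Sg a b g) * v b))"
      by (rule sum.cong[OF refl], rule Bochner_Integration.integral_sum[symmetric])
         (intro intg bm_mult bm_const bmA bmR bmS, auto)
    also have "\<dots> = integral\<^sup>L M (\<lambda>g. \<Sum>a\<in>TI. \<Sum>b\<in>TI. cnj (v a) * (Ach g * Rr g * Sg a b g) * v b)"
      by (rule Bochner_Integration.integral_sum[symmetric])
         (intro intg bm_sum TIfin bm_mult bm_const bmA bmR bmS, auto)
    also have "\<dots> = integral\<^sup>L M F"
      unfolding F_def by (intro Bochner_Integration.integral_cong refl) (simp add: sum_distrib_left mult_ac)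
    finally show ?thesis .
  qed

  define T where "T h = (\<lambda>g. \<lambda>i\<in>{..<k}. matrix_inv (h i) ** g i :: complex^'n^'n)" for h g :: "nat \<Rightarrow> complex^'n^'n"
  have lm: "(\<lambda>x. matrix_inv (h i) ** x) \<in> measurable \<mu> \<mu>" if "h \<in> space M" "i < k" for h i
    by (rule haar_meas_lmult[OF H]) (rule cmg_mult[OF G cmg_inv[OF G spM[OF that]]])
  have Tmeas: "T h \<in> measurable M M" if "h \<in> space M" for h
    unfolding T_def M_def by (rule translate_meas) (use lm[OF that] in auto)
  have Tdistr: "distr M M (T h) = M" if "h \<in> space M" for h
    unfolding T_def M_def
  proof (rule distr_PiM_translate[OF _ muprob])
    fix i assume i: "i \<in> {..<k}"
    show "(\<lambda>x. matrix_inv (h i) ** x) \<in> measurable \<mu> \<mu>" using lm[OF that] i by auto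
    have "matrix_inv (h i) \<in> G" using cmg_inv[OF G spM[OF that]] i by auto
    thus "distr \<mu> \<mu> (\<lambda>x. matrix_inv (h i) ** x) = \<mu>" using H unfolding haar_measure_def by auto
  qed auto
  have Fmeas: "F \<in> borel_measurable M" using bmF unfolding bm_def by auto
  have step3: "integral\<^sup>L M F = (\<integral>h. (\<integral>g. F (T h g) \<partial>M) \<partial>M)"
  proof -
    have "(\<integral>h. (\<integral>g. F (T h g) \<partial>M) \<partial>M) = (\<integral>h. integral\<^sup>L M F \<partial>M)"
    proof (rule Bochner_Integration.integral_cong[OF refl])
      fix h assume h: "h \<in> space M"
      have "integral\<^sup>L M F = integral\<^sup>L (distr M M (T h)) F" using Tdistr[OF h] by simp
      also have "\<dots> = (\<integral>g. F (T h g) \<partial>M)" by (rule integral_distr[OF Tmeas[OF h] Fmeas])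
      finally show "(\<integral>g. F (T h g) \<partial>M) = integral\<^sup>L M F" by simp
    qed
    also have "\<dots> = integral\<^sup>L M F" by (simp add: Mp.prob_space)
    finally show ?thesis by simp
  qed

  define DA where "DA i = {..<d\<alpha> i} \<times> {..<d\<alpha> i}" for i
  define XA where "XA = PiE {..<k} DA"
  define UA where "UA f g = (\<Prod>i<k. \<alpha> i (g i) (fst (f i)) (snd (f i)))" for f :: "nat \<Rightarrow> nat \<times> nat" and g :: "nat \<Rightarrow> complex^'n^'n"
  define DR where "DR s = {..<d\<rho> (fst s) (snd s)} \<times> {..<d\<rho> (fst s) (snd s)}" for s :: "nat \<times> nat"
  define XR where "XR = PiE P DR"
  define B where "B s pq g = (\<Sum>c<d\<rho> (fst s) (snd s). \<rho> (fst s) (snd s) (g (fst s)) (fst pq) c * cnj (\<rho> (fst s) (snd s) (g (snd s)) (snd pq) c))"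
    for s pq :: "nat \<times> nat" and g :: "nat \<Rightarrow> complex^'n^'n"
  define UR where "UR f g = (\<Prod>s\<in>P. B s (f s) g)" for f :: "nat \<times> nat \<Rightarrow> nat \<times> nat" and g
  define W where "W C g = (\<Sum>b\<in>TI. Sg C b g * v b)" for C g
  define U where "U p g = UA (fst (fst p)) g * UR (snd (fst p)) g * W (snd p) g" for p g
  define X where "X = (XA \<times> XR) \<times> TI"
  have XAfin: "finite XA" unfolding XA_def DA_def by (intro finite_PiE) auto
  have XRfin: "finite XR" unfolding XR_def DR_def by (intro finite_PiE Pfin) auto
  have Xfin: "finite X" unfolding X_def using XAfin XRfin TIfin by auto

  have kern: "F (T h g) = (\<Sum>p\<in>X. cnj (U p h) * U p g)" if h: "h \<in> space M" and g: "g \<in> space M" for h g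
  proof -
    have Tev: "T h g i = matrix_inv (h i) ** g i" if "i < k" for i
      unfolding T_def using that by simp
    have kA: "Ach (T h g) = (\<Sum>f\<in>XA. cnj (UA f h) * UA f g)"
    proof -
      have "Ach (T h g) = (\<Prod>i<k. \<Sum>p\<in>DA i. cnj (\<alpha> i (h i) (fst p) (snd p)) * \<alpha> i (g i) (fst p) (snd p))"
        unfolding Ach_def DA_def
        by (intro prod.cong refl) (simp add: Tev char_translate[OF G ra spM[OF h] spM[OF g]])
      also have "\<dots> = (\<Sum>f\<in>XA. cnj (UA f h) * UA f g)"
        unfolding XA_def UA_def by (rule kprod) (auto simp: DA_def)
      finally show ?thesis .
    qed
    have kR: "Rr (T h g) = (\<Sum>f\<in>XR. cnj (UR f h) * UR f g)"
    proof -
      have "Rr (T h g) = (\<Prod>s\<in>P. \<Sum>pq\<in>DR s. cnj (B s pq h) * B s pq g)"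
        unfolding Rr_def
      proof (rule prod.cong[OF refl])
        fix s assume "s \<in> P"
        then obtain i j where ij: "s = (i,j)" "i < j" "j < k" unfolding P_def by auto
        have r: "unitary_rep G (d\<rho> i j) (\<rho> i j)" by (rule rr[OF ij(2,3)])
        have ik: "i < k" using ij by simp
        have "(\<Sum>a<d\<rho> i j. \<Sum>c<d\<rho> i j. \<rho> i j (T h g i) a c * cnj (\<rho> i j (T h g j) a c))
           = (\<Sum>a<d\<rho> i j. \<Sum>c<d\<rho> i j. (\<Sum>p<d\<rho> i j. cnj (\<rho> i j (h i) p a) * \<rho> i j (g i) p c)
                 * cnj (\<Sum>q<d\<rho> i j. cnj (\<rho> i j (h j) q a) * \<rho> i j (g j) q c))"
          by (intro sum.cong refl)
             (simp add: Tev ik ij(3) rep_translate[OF G r spM[OF g] spM[OF h]])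
        also have "\<dots> = (\<Sum>pq\<in>DR s. cnj (B s pq h) * B s pq g)"
          unfolding rho_alg DR_def B_def ij(1) by simp
        finally show "(case s of (i, j) \<Rightarrow> \<Sum>a<d\<rho> i j. \<Sum>c<d\<rho> i j. \<rho> i j (T h g i) a c * cnj (\<rho> i j (T h g j) a c))
           = (\<Sum>pq\<in>DR s. cnj (B s pq h) * B s pq g)" unfolding ij(1) by simp
      qed
      also have "\<dots> = (\<Sum>f\<in>XR. cnj (UR f h) * UR f g)"
        unfolding XR_def UR_def by (rule kprod[OF Pfin]) (auto simp: DR_def)
      finally show ?thesis .
    qed
    have kS: "(\<Sum>a\<in>TI. \<Sum>b\<in>TI. cnj (v a) * Sg a b (T h g) * v b) = (\<Sum>C\<in>TI. cnj (W C h) * W C g)"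
    proof -
      have "(\<Sum>a\<in>TI. \<Sum>b\<in>TI. cnj (v a) * Sg a b (T h g) * v b)
          = (\<Sum>a\<in>TI. \<Sum>b\<in>TI. cnj (v a) * (\<Sum>C\<in>TI. cnj (Sg C a h) * Sg C b g) * v b)"
      proof (intro sum.cong refl)
        fix a b assume a: "a \<in> TI" and b: "b \<in> TI"
        have "Sg a b (T h g) = (\<Prod>i<k. \<Sum>c<d\<sigma> i. cnj (\<sigma> i (h i) c (a i)) * \<sigma> i (g i) c (b i))"
          unfolding Sg_def
          by (intro prod.cong refl) (simp add: Tev rep_translate[OF G rs spM[OF g] spM[OF h]] TIi[OF a] TIi[OF b])
        also have "\<dots> = (\<Sum>C\<in>TI. cnj (Sg C a h) * Sg C b g)"
          unfolding Sg_def TI_def tensor_indices_def by (rule kprod) auto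
        finally show "cnj (v a) * Sg a b (T h g) * v b = cnj (v a) * (\<Sum>C\<in>TI. cnj (Sg C a h) * Sg C b g) * v b"
          by simp
      qed
      also have "\<dots> = (\<Sum>C\<in>TI. cnj (W C h) * W C g)"
        unfolding W_def by (rule sig_alg)
      finally show ?thesis .
    qed
    have "F (T h g) = (\<Sum>f\<in>XA. cnj (UA f h) * UA f g) * (\<Sum>f\<in>XR. cnj (UR f h) * UR f g)
                      * (\<Sum>C\<in>TI. cnj (W C h) * W C g)"
      unfolding F_def kA kR kS ..
    also have "\<dots> = (\<Sum>p\<in>X. cnj (U p h) * U p g)"
      unfolding kbin X_def U_def by simp
    finally show ?thesis .
  qed

  have bmU: "bm M (U p)" if p: "p \<in> X" for p
  proof -
    obtain fa fr C where pe: "p = ((fa, fr), C)" and fa: "fa \<in> XA" and fr: "fr \<in> XR" and C: "C \<in> TI"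
      using p unfolding X_def by auto
    have bUA: "bm M (UA fa)"
      unfolding UA_def[abs_def]
    proof (intro bm_prod finite_lessThan)
      fix i assume "i \<in> {..<k}"
      hence i: "i < k" by simp
      have "fa i \<in> DA i" using fa i unfolding XA_def by auto
      thus "bm M (\<lambda>g. \<alpha> i (g i) (fst (fa i)) (snd (fa i)))"
        by (intro eA i) (auto simp: DA_def)
    qed
    have bUR: "bm M (UR fr)"
      unfolding UR_def[abs_def]
    proof (intro bm_prod Pfin)
      fix s assume s: "s \<in> P"
      then obtain i j where ij: "s = (i,j)" "i < j" "j < k" unfolding P_def by auto
      have "fr s \<in> DR s" using fr s unfolding XR_def by auto
      hence "fst (fr s) < d\<rho> i j" "snd (fr s) < d\<rho> i j" unfolding DR_def ij(1) by auto
      thus "bm M (B s (fr s))"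
        unfolding B_def[abs_def] ij(1) fst_conv snd_conv
        by (intro bm_sum bm_mult bm_cnj eR finite_lessThan) (use ij in auto)
    qed
    have bW: "bm M (W C)"
      unfolding W_def[abs_def] Sg_def
      by (intro bm_sum bm_mult bm_prod bm_const eS TIfin finite_lessThan) (auto intro: TIi C)
    show ?thesis unfolding pe U_def[abs_def] fst_conv snd_conv
      by (intro bm_mult bUA bUR bW)
  qed

  have "(\<Sum>a\<in>TI. \<Sum>b\<in>TI. cnj (v a) * Phi_entry \<mu> k d\<sigma> \<sigma> d\<alpha> \<alpha> d\<rho> \<rho> a b * v b)
      = (\<integral>h. (\<integral>g. F (T h g) \<partial>M) \<partial>M)" using Qeq step3 by simp
  also have "\<dots> = (\<integral>h. (\<integral>g. (\<Sum>p\<in>X. cnj (U p h) * U p g) \<partial>M) \<partial>M)"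
    by (intro Bochner_Integration.integral_cong refl kern)
  also have "\<dots> = (\<Sum>p\<in>X. cnj (integral\<^sup>L M (U p)) * integral\<^sup>L M (U p))"
    by (rule psd_int[OF Mprob Xfin intg[OF bmU]])
  finally have Qf: "(\<Sum>a\<in>TI. \<Sum>b\<in>TI. cnj (v a) * Phi_entry \<mu> k d\<sigma> \<sigma> d\<alpha> \<alpha> d\<rho> \<rho> a b * v b)
      = (\<Sum>p\<in>X. cnj (integral\<^sup>L M (U p)) * integral\<^sup>L M (U p))" .
  show ?thesis unfolding TI_def[symmetric] Qf by (rule sum_cnj_sq)
qed

end
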